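(* Let $V$ be a vertex operator algebra and fix $n\in\mathbb{N}$. Let $u\in V$ be homogeneous and $v\in V$. (a) If $\mathrm{wt}\,u>-n$, then for every integer $m\ge n+1$, \[ u_{\mathrm{wt}\,u-m-1}v\ \sim_n\ (-1)^{m+\mathrm{wt}\,u}\sum_{j=1}^{n+\mathrm{wt}\,u}\binom{m-n-1}{j-1}\binom{m-n-j-1}{n+\mathrm{wt}\,u-j}\,u_{\mathrm{wt}\,u-n-j-1}v . \] Moreover, for $n+1\le m\le 2n+\mathrm{wt}\,u$ the right-hand side equals $u_{\mathrm{wt}\,u-m-1}v$ (so the relation is trivial in that range). (b) If $\mathrm{wt}\,u=-n$, then for every integer $m\ge n+1$, $u_{\mathrm{wt}\,u-m-1}v\sim_n 0$.
   Context: $V$ is a vertex operator algebra with vacuum $\mathbf{1}$, vertex operator $Y(v,x)=\sum_{k\in\mathbb{Z}}v_kx^{-k-1}$, and Virasoro operators $L(m)$; for homogeneous $v$, $\mathrm{wt}\,v$ denotes its $L(0)$-eigenvalue (an integer). For $n\in\mathbb{N}$, homogeneous $u\in V$ and $w\in V$, set $u\circ_n w=\mathrm{Res}_x\,(1+x)^{\mathrm{wt}\,u+n}Y(u,x)w\,x^{-2n-2}$ (a finite sum in $V$; $(1+x)^p$ is expanded in nonnegative powers of $x$), extended linearly in $u$. Let $O_n^\circ(V)=\mathrm{span}\{u\circ_n w: u,w\in V\}$. Write $a\sim_n b$ if $a-b\in O_n^\circ(V)$. Binomial coefficients: $\binom{p}{q}=p(p-1)\cdots(p-q+1)/q!$ for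 $p\in\mathbb{Z}$, $q\in\mathbb{N}$, and $\binom{p}{q}=0$ for $q<0$. *)

theory Defs
  imports Complex_Main
begin

text \<open>The underlying space is a type 'v with a complex scalar multiplication sc,
  the modes are Y u k w = u_k w (coefficient of x^(-k-1) in Y(u,x)w),
  vac is the vacuum, om the conformal vector, c the central charge.\<close>

definition Lop :: "('v \<Rightarrow> int \<Rightarrow> 'v \<Rightarrow> 'v) \<Rightarrow> 'v \<Rightarrow> int \<Rightarrow> 'v \<Rightarrow> 'v" where
  "Lop Y om m = Y om (m + 1)"

definition homog :: "(complex \<Rightarrow> 'v \<Rightarrow> 'v) \<Rightarrow> ('v \<Rightarrow> int \<Rightarrow> 'v \<Rightarrow> 'v) \<Rightarrow> 'v \<Rightarrow> 'v \<Rightarrow> int \<Rightarrow> bool" where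
  "homog sc Y om u k \<longleftrightarrow> Lop Y om 0 u = sc (of_int k) u"

definition is_voa ::
  "(complex \<Rightarrow> 'v::ab_group_add \<Rightarrow> 'v) \<Rightarrow> ('v \<Rightarrow> int \<Rightarrow> 'v \<Rightarrow> 'v) \<Rightarrow> 'v \<Rightarrow> 'v \<Rightarrow> complex \<Rightarrow> bool" where
  "is_voa sc Y vac om c \<longleftrightarrow>
     vector_space sc
     \<comment> \<open>bilinearity of (u,w) \<mapsto> u_k w\<close>
   \<and> (\<forall>k. (\<forall>w. Vector_Spaces.linear sc sc (\<lambda>u. Y u k w)) \<and> (\<forall>u. Vector_Spaces.linear sc sc (Y u k)))
     \<comment> \<open>truncation\<close>
   \<and> (\<forall>u w. \<exists>N. \<forall>k\<ge>N. Y u k w = 0)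
     \<comment> \<open>vacuum and creation\<close>
   \<and> (\<forall>k w. Y vac k w = (if k = -1 then w else 0))
   \<and> (\<forall>u k. k \<ge> 0 \<longrightarrow> Y u k vac = 0) \<and> (\<forall>u. Y u (-1) vac = u)
     \<comment> \<open>Jacobi identity, in Borcherds form (sums stabilise by truncation)\<close>
   \<and> (\<forall>u v w p q r. \<exists>N. \<forall>M\<ge>N.
        (\<Sum>i<M. sc ((of_int p :: complex) gchoose i) (Y (Y u (r + int i) v) (p + q - int i) w))
      = (\<Sum>i<M. sc ((-1) ^ i * ((of_int r :: complex) gchoose i))
            (Y u (p + r - int i) (Y v (q + int i) w)
             - sc ((-1) powi r) (Y v (q + r - int i) (Y u (p + int i) w)))))
     \<comment> \<open>Virasoro relations\<close>
   \<and> (\<forall>m n w. Lop Y om m (Lop Y om n w) - Lop Y om n (Lop Y om m w)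
        = sc (of_int (m - n)) (Lop Y om (m + n) w)
          + (if m + n = 0 then sc ((of_int (m ^ 3 - m) / 12) * c) w else 0))
     \<comment> \<open>L(-1)-derivative property: Y(L(-1)u,x) = d/dx Y(u,x)\<close>
   \<and> (\<forall>u k w. Y (Lop Y om (-1) u) k w = sc (- of_int k) (Y u (k - 1) w))
     \<comment> \<open>integer grading by L(0)-eigenvalues: V is the sum of the weight spaces\<close>
   \<and> (\<forall>v. \<exists>S f. finite S \<and> (\<forall>k\<in>S. homog sc Y om (f k) k) \<and> v = (\<Sum>k\<in>S. f k))
     \<comment> \<open>finite-dimensional weight spaces\<close>
   \<and> (\<forall>k. \<exists>B. finite B \<and> {u. homog sc Y om u k} \<subseteq> module.span sc B)
     \<comment> \<open>grading bounded below\<close>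
   \<and> (\<exists>N. \<forall>k<N. \<forall>u. homog sc Y om u k \<longrightarrow> u = 0)"

text \<open>u \<circ>_n w for homogeneous u of weight k:
  Res_x (1+x)^(k+n) Y(u,x) w x^(-2n-2) = \<Sum>_{i\<ge>0} binom(k+n,i) u_(i-2n-2) w.
  The sum is finite by truncation; we take it up to the least N beyond which
  all modes u_j w with j \<ge> N-2n-2 vanish.\<close>
definition circ ::
  "(complex \<Rightarrow> 'v::ab_group_add \<Rightarrow> 'v) \<Rightarrow> ('v \<Rightarrow> int \<Rightarrow> 'v \<Rightarrow> 'v) \<Rightarrow> nat \<Rightarrow> 'v \<Rightarrow> int \<Rightarrow> 'v \<Rightarrow> 'v" where
  "circ sc Y n u k w =
     (let N = (LEAST N::nat. \<forall>j::int. j \<ge> int N - 2 * int n - 2 \<longrightarrow> Y u j w = 0)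
      in \<Sum>i<N. sc ((of_int (k + int n) :: complex) gchoose i) (Y u (int i - 2 * int n - 2) w))"

text \<open>O_n^\<circ>(V): span of all u \<circ>_n w (u homogeneous of weight k; the linear
  extension in u gives the same span since V is spanned by homogeneous vectors).\<close>
definition Ocirc ::
  "(complex \<Rightarrow> 'v::ab_group_add \<Rightarrow> 'v) \<Rightarrow> ('v \<Rightarrow> int \<Rightarrow> 'v \<Rightarrow> 'v) \<Rightarrow> 'v \<Rightarrow> nat \<Rightarrow> 'v set" where
  "Ocirc sc Y om n = module.span sc {circ sc Y n u k w | u k w. homog sc Y om u k}"

definition equiv_n ::
  "(complex \<Rightarrow> 'v::ab_group_add \<Rightarrow> 'v) \<Rightarrow> ('v \<Rightarrow> int \<Rightarrow> 'v \<Rightarrow> 'v) \<Rightarrow> 'v \<Rightarrow> nat \<Rightarrow> 'v \<Rightarrow> 'v \<Rightarrow> bool" where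
  "equiv_n sc Y om n a b \<longleftrightarrow> a - b \<in> Ocirc sc Y om n"

end

theory Submission
  imports Defs "HOL-Computational_Algebra.Polynomial"
begin


lemma gbin_poly:
  fixes a :: complex
  shows "\<exists>P. degree P \<le> k \<and> (\<forall>x. (x + a) gchoose k = poly P x)"
proof (induction k)
  case 0
  show ?case by (intro exI[of _ 1]) simp
next
  case (Suc k)
  then obtain P where P: "degree P \<le> k" "\<forall>x. (x + a) gchoose k = poly P x" by blast
  define Q where "Q = smult (1 / of_nat (Suc k)) (P * [:a - of_nat k, 1:])"
  have "degree Q \<le> Suc k"
    unfolding Q_def using degree_mult_le[of P "[:a - of_nat k, 1:]"] P(1) by simp
  moreover have "(x + a) gchoose Suc k = poly Q x" for x
  proof -
    have "(x + a) gchoose Suc k = ((x + a) gchoose k) * ((x + a) - of_nat k) / of_nat (Suc k)"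
    proof -
      have "of_nat (Suc k) * ((x + a) gchoose Suc k) = ((x + a) gchoose k) * ((x + a) - of_nat k)"
        using gbinomial_mult_1'[of "x+a" k] by (simp add: algebra_simps)
      thus ?thesis by (simp add: field_simps del: of_nat_Suc)
    qed
    also have "\<dots> = poly P x * ((x + a) - of_nat k) / of_nat (Suc k)" using P(2) by simp
    also have "\<dots> = poly Q x" by (simp add: Q_def field_simps)
    finally show ?thesis .
  qed
  ultimately show ?case by blast
qed

lemma alt_shift:
  fixes h :: "nat \<Rightarrow> complex"
  shows "(\<Sum>s\<le>Suc N. (-1)^s * of_nat (Suc N choose s) * h s)
       = (\<Sum>s\<le>N. (-1)^s * of_nat (N choose s) * (h s - h (Suc s)))"
proof -
  have A: "(\<Sum>s\<le>Suc N. (-1)^s * of_nat (Suc N choose s) * h s)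
      = h 0 + (\<Sum>s\<le>N. (-1)^(Suc s) * of_nat (N choose s) * h (Suc s))
            + (\<Sum>s\<le>N. (-1)^(Suc s) * of_nat (N choose Suc s) * h (Suc s))"
    apply (subst sum.atMost_Suc_shift)
    apply (simp only: binomial_Suc_Suc of_nat_add)
    apply (simp add: ring_distribs sum.distrib sum_negf sum_subtractf)
    done
  have B: "h 0 + (\<Sum>s\<le>N. (-1)^(Suc s) * of_nat (N choose Suc s) * h (Suc s))
      = (\<Sum>s\<le>Suc N. (-1)^s * of_nat (N choose s) * h s)"
    by (rule sym, subst sum.atMost_Suc_shift) simp
  have C: "(\<Sum>s\<le>Suc N. (-1)^s * of_nat (N choose s) * h s) = (\<Sum>s\<le>N. (-1)^s * of_nat (N choose s) * h s)"
    by simp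
  have D: "(\<Sum>s\<le>N. (-1)^(Suc s) * of_nat (N choose s) * h (Suc s))
      = - (\<Sum>s\<le>N. (-1)^s * of_nat (N choose s) * h (Suc s))"
    by (simp add: sum_negf[symmetric])
  have E: "(\<Sum>s\<le>N. (-1)^s * of_nat (N choose s) * (h s - h (Suc s)))
     = (\<Sum>s\<le>N. (-1)^s * of_nat (N choose s) * h s) - (\<Sum>s\<le>N. (-1)^s * of_nat (N choose s) * h (Suc s))"
    by (simp add: sum_subtractf[symmetric] right_diff_distrib)
  show ?thesis unfolding A E D using B C by (simp only:) (simp add: algebra_simps)
qed

lemma shift_degree:
  fixes P :: "complex poly"
  assumes "degree P > 0"
  shows "degree (P - pcompose P [:1,1:]) < degree P"
proof -
  let ?Q = "P - pcompose P [:1,1:]"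
  let ?d = "degree P"
  have d1: "degree (pcompose P [:1,1:]) = ?d" by (simp add: degree_pcompose)
  have lc: "lead_coeff (pcompose P [:1,1:]) = lead_coeff P"
    by (subst lead_coeff_comp) simp_all
  have le: "degree ?Q \<le> ?d" using degree_diff_le[of P ?d "pcompose P [:1,1:]"] d1 by simp
  have c0: "coeff ?Q ?d = 0" using lc d1 by simp
  show ?thesis
  proof (rule ccontr)
    assume "\<not> ?thesis"
    hence "degree ?Q = ?d" using le by simp
    hence "lead_coeff ?Q = 0" using c0 by simp
    hence "?Q = 0" by (simp only: leading_coeff_0_iff)
    hence "degree ?Q = 0" by simp
    thus False using assms \<open>degree ?Q = ?d\<close> by simp
  qed
qed

lemma fin_diff:
  fixes P :: "complex poly"
  assumes "degree P < N"
  shows "(\<Sum>s\<le>N. (-1)^s * of_nat (N choose s) * poly P (x + of_nat s)) = 0"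
  using assms
proof (induction N arbitrary: P x)
  case 0
  then show ?case by simp
next
  case (Suc N)
  define Q where "Q = P - pcompose P [:1,1:]"
  have hQ: "poly P (x + of_nat s) - poly P (x + of_nat (Suc s)) = poly Q (x + of_nat s)" for s
    by (simp add: Q_def poly_pcompose algebra_simps)
  have "(\<Sum>s\<le>Suc N. (-1)^s * of_nat (Suc N choose s) * poly P (x + of_nat s))
      = (\<Sum>s\<le>N. (-1)^s * of_nat (N choose s) * poly Q (x + of_nat s))"
    using alt_shift[of N "\<lambda>s. poly P (x + of_nat s)"] hQ by simp
  also have "\<dots> = 0"
  proof (cases "degree P = 0")
    case True
    then obtain c where "P = [:c:]" by (metis degree_eq_zeroE)
    hence "Q = 0" by (simp add: Q_def)
    thus ?thesis by simp
  next
    case False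
    hence "degree Q < N" using shift_degree[of P] Suc.prems by (simp add: Q_def)
    thus ?thesis by (rule Suc.IH)
  qed
  finally show ?case .
qed

definition Gc :: "nat \<Rightarrow> nat \<Rightarrow> nat \<Rightarrow> complex" where
  "Gc N p t = (-1)^(p+N+1) * (of_nat p gchoose t) * (of_int (int p - int t - 1) gchoose (N - Suc t))"

lemma Gc_rec:
  assumes "t < N"
  shows "(\<Sum>s\<le>N. of_nat (N choose s) * Gc N (k+s) t) = 0"
proof -
  obtain P1 :: "complex poly" where P1: "degree P1 \<le> t" "\<forall>x. (x + 0) gchoose t = poly P1 x"
    using gbin_poly[where a=0 and k=t] by blast
  obtain P2 :: "complex poly" where P2: "degree P2 \<le> N - Suc t" "\<forall>x. (x + (- of_nat t - 1)) gchoose (N - Suc t) = poly P2 x"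
    using gbin_poly[where a="- of_nat t - 1" and k="N - Suc t"] by blast
  define P where "P = P1 * P2"
  have "degree P \<le> t + (N - Suc t)" unfolding P_def
    using degree_mult_le[of P1 P2] P1(1) P2(1) by linarith
  hence dP: "degree P < N" using assms by linarith
  have G: "Gc N (k+s) t = (-1)^(k+N+1) * ((-1)^s * poly P (of_nat k + of_nat s))" for s
  proof -
    have "of_int (int (k+s) - int t - 1) = (of_nat k + of_nat s) + (- of_nat t - (1::complex))" by simp
    moreover have h2: "((of_nat k + of_nat s) + (- of_nat t - (1::complex))) gchoose (N - Suc t) = poly P2 (of_nat k + of_nat s)"
      using P2(2) by blast
    moreover have h1: "((of_nat k + of_nat s) + (0::complex)) gchoose t = poly P1 (of_nat k + of_nat s)"
      using P1(2) by blast
    ultimately have "Gc N (k+s) t = (-1)^(k+s+N+1) * (poly P1 (of_nat k + of_nat s) * poly P2 (of_nat k + of_nat s))"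
      unfolding Gc_def by (simp only: mult.assoc of_nat_add add_0_right)
    also have "\<dots> = (-1)^(k+N+1) * ((-1)^s * poly P (of_nat k + of_nat s))"
      by (simp add: P_def power_add)
    finally show ?thesis .
  qed
  have "(\<Sum>s\<le>N. of_nat (N choose s) * Gc N (k+s) t)
     = (-1)^(k+N+1) * (\<Sum>s\<le>N. (-1)^s * of_nat (N choose s) * poly P (of_nat k + of_nat s))"
    unfolding G by (simp add: sum_distrib_left algebra_simps)
  also have "\<dots> = 0" using fin_diff[OF dP] by simp
  finally show ?thesis .
qed

lemma gchoose_nat_zero: "k > a \<Longrightarrow> (of_nat a :: complex) gchoose k = 0"
  by (simp add: binomial_gbinomial[symmetric])

lemma Gc_init:
  assumes "p < N" "t < N"
  shows "Gc N p t = (if t = p then 1 else 0)"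
proof (cases "t < p")
  case True
  have e1: "of_int (int p - int t - 1) = (of_nat (p - t - 1) :: complex)" using True by (simp add: of_nat_diff)
  have "N - Suc t > p - t - 1" using True assms by linarith
  hence eq: "(of_int (int p - int t - 1) :: complex) gchoose (N - Suc t) = 0"
    by (simp only: e1) (rule gchoose_nat_zero)
  have "Gc N p t = 0" by (simp only: Gc_def eq mult_zero_right)
  thus ?thesis using True by simp
next
  case False
  show ?thesis
  proof (cases "t = p")
    case True
    have "of_int (int p - int t - 1) = (-1 :: complex)" using True by simp
    moreover have "((-1::complex) gchoose (N - Suc p)) = (-1)^(N - Suc p)"
      by (simp add: gbinomial_negated_upper[of "-1"] binomial_gbinomial[symmetric])
    moreover have "(-1::complex)^(p+N+1) * (-1)^(N - Suc p) = 1"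
    proof -
      have "(p+N+1) + (N - Suc p) = 2 * N" using assms by simp
      hence "(-1::complex)^(p+N+1) * (-1)^(N - Suc p) = (-1)^(2*N)" by (metis power_add)
      thus ?thesis by simp
    qed
    ultimately show ?thesis unfolding Gc_def using True by (simp add: binomial_gbinomial[symmetric] mult.assoc)
  next
    case False2: False
    hence "t > p" using False by simp
    thus ?thesis unfolding Gc_def using gchoose_nat_zero by simp
  qed
qed



lemma reduce:
  fixes sc :: "complex \<Rightarrow> 'v::ab_group_add \<Rightarrow> 'v" and e :: "nat \<Rightarrow> 'v"
  assumes vs: "vector_space sc"
  and rel: "\<And>k. (\<Sum>s\<le>N. sc (of_nat (N choose s)) (e (k+s))) \<in> module.span sc B"
  and G1: "\<And>p t. p<N \<Longrightarrow> t<N \<Longrightarrow> G p t = (if t=p then 1 else 0)"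
  and G2: "\<And>k t. t<N \<Longrightarrow> (\<Sum>s\<le>N. of_nat (N choose s) * G (k+s) t) = 0"
  shows "e p - (\<Sum>t<N. sc (G p t) (e t)) \<in> module.span sc B"
proof -
  interpret V: vector_space sc by (rule vs)
  show ?thesis
  proof (induction p rule: less_induct)
    case (less p)
    show ?case
    proof (cases "p < N")
      case True
      have "(\<Sum>t<N. sc (G p t) (e t)) = (\<Sum>t<N. if t = p then e t else 0)"
        by (rule sum.cong) (auto simp: G1 True)
      also have "\<dots> = e p" using True by (simp add: sum.delta)
      finally show ?thesis by (simp add: V.span_zero)
    next
      case False
      define k where "k = p - N"
      have pk: "p = k + N" using False k_def by simp
      define X where "X = (\<Sum>s\<le>N. sc (of_nat (N choose s)) (e (k+s)))"
      define D where "D s = e (k+s) - (\<Sum>t<N. sc (G (k+s) t) (e t))" for s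
      have X: "X \<in> module.span sc B" unfolding X_def by (rule rel)
      have D: "s < N \<Longrightarrow> D s \<in> module.span sc B" for s
        unfolding D_def by (rule less.IH) (simp add: pk)
      have XD: "(\<Sum>s<N. sc (of_nat (N choose s)) (D s)) \<in> module.span sc B"
        by (intro V.span_sum V.span_scale D) simp
      define A where "A = (\<Sum>s<N. sc (of_nat (N choose s)) (e (k+s)))"
      define Bs where "Bs = (\<Sum>s<N. \<Sum>t<N. sc (of_nat (N choose s) * G (k+s) t) (e t))"
      have X2: "X = A + e p" unfolding X_def A_def
        by (simp add: lessThan_Suc_atMost[symmetric] pk add.commute)
      have D2: "(\<Sum>s<N. sc (of_nat (N choose s)) (D s)) = A - Bs"
        unfolding D_def A_def Bs_def
        by (simp add: V.scale_right_diff_distrib V.scale_sum_right sum_subtractf)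
      have Z: "(\<Sum>t<N. sc (\<Sum>s\<le>N. of_nat (N choose s) * G (k+s) t) (e t)) = 0"
        by (simp add: G2)
      have Z2: "(\<Sum>t<N. sc (\<Sum>s\<le>N. of_nat (N choose s) * G (k+s) t) (e t))
          = Bs + (\<Sum>t<N. sc (G p t) (e t))"
      proof -
        have "(\<Sum>t<N. sc (\<Sum>s\<le>N. of_nat (N choose s) * G (k+s) t) (e t))
            = (\<Sum>t<N. \<Sum>s\<le>N. sc (of_nat (N choose s) * G (k+s) t) (e t))"
          by (simp add: V.scale_sum_left)
        also have "\<dots> = (\<Sum>s\<le>N. \<Sum>t<N. sc (of_nat (N choose s) * G (k+s) t) (e t))"
          by (rule sum.swap)
        also have "\<dots> = Bs + (\<Sum>t<N. sc (G p t) (e t))"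
          unfolding Bs_def by (simp add: lessThan_Suc_atMost[symmetric] pk add.commute)
        finally show ?thesis .
      qed
      have "e p - (\<Sum>t<N. sc (G p t) (e t)) = X - (\<Sum>s<N. sc (of_nat (N choose s)) (D s))"
      proof -
        have Sp: "(\<Sum>t<N. sc (G p t) (e t)) = - Bs" using Z Z2
          by (metis add.commute add_eq_0_iff)
        show ?thesis unfolding Sp X2 D2 by (simp add: algebra_simps)
      qed
      thus ?thesis using X XD by (simp add: V.span_diff)
    qed
  qed
qed



lemma voa_vs: "is_voa sc Y vac om c \<Longrightarrow> vector_space sc"
  unfolding is_voa_def by blast

lemma voa_lin3: "is_voa sc Y vac om c \<Longrightarrow> Y u k (sc a x) = sc a (Y u k x)"
  unfolding is_voa_def by (metis module_hom.scale module_hom_iff_linear)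

lemma voa_trunc: "is_voa sc Y vac om c \<Longrightarrow> \<exists>N. \<forall>k\<ge>N. Y u k w = 0"
  unfolding is_voa_def by (elim conjE) (drule spec[of _ u], drule spec[of _ w], assumption)

lemma voa_deriv: "is_voa sc Y vac om c \<Longrightarrow> Y (Lop Y om (-1) u) k w = sc (- of_int k) (Y u (k - 1) w)"
  unfolding is_voa_def by blast

lemma voa_vir: "is_voa sc Y vac om c \<Longrightarrow> Lop Y om m (Lop Y om n w) - Lop Y om n (Lop Y om m w)
        = sc (of_int (m - n)) (Lop Y om (m + n) w)
          + (if m + n = 0 then sc ((of_int (m ^ 3 - m) / 12) * c) w else 0)"
  unfolding is_voa_def by blast

lemma homog_Lm1:
  assumes voa: "is_voa sc Y vac om c" and h: "homog sc Y om u wt"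
  shows "homog sc Y om (Lop Y om (-1) u) (wt + 1)"
proof -
  interpret V: vector_space sc by (rule voa_vs[OF voa])
  have v: "Lop Y om 0 (Lop Y om (-1) u) - Lop Y om (-1) (Lop Y om 0 u) = sc 1 (Lop Y om (-1) u)"
    using voa_vir[OF voa, of 0 "-1" u] by simp
  have "Lop Y om (-1) (Lop Y om 0 u) = sc (of_int wt) (Lop Y om (-1) u)"
    using h unfolding homog_def by (simp add: Lop_def voa_lin3[OF voa])
  hence "Lop Y om 0 (Lop Y om (-1) u) = sc (of_int wt) (Lop Y om (-1) u) + Lop Y om (-1) u"
    using v by (simp add: algebra_simps)
  thus ?thesis unfolding homog_def by (simp add: V.scale_left_distrib)
qed

definition Ak :: "(complex \<Rightarrow> 'v::ab_group_add \<Rightarrow> 'v) \<Rightarrow> ('v \<Rightarrow> int \<Rightarrow> 'v \<Rightarrow> 'v) \<Rightarrow> nat \<Rightarrow> 'v \<Rightarrow> nat \<Rightarrow> nat \<Rightarrow> 'v \<Rightarrow> 'v" where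
  "Ak sc Y n u N k w = (\<Sum>i\<le>N. sc (of_nat (N choose i)) (Y u (int i - 2 * int n - 2 - int k) w))"

lemma circ_eq:
  assumes voa: "is_voa sc Y vac om c"
  shows "circ sc Y n u (int N - int n) w = Ak sc Y n u N 0 w"
proof -
  interpret V: vector_space sc by (rule voa_vs[OF voa])
  let ?P = "\<lambda>L::nat. \<forall>j::int. j \<ge> int L - 2 * int n - 2 \<longrightarrow> Y u j w = 0"
  obtain N0 where N0: "\<forall>k\<ge>N0. Y u k w = 0" using voa_trunc[OF voa] by blast
  have "?P (nat (N0 + 2 * int n + 2))" using N0 by auto
  hence PL: "?P (LEAST L. ?P L)" by (rule LeastI)
  define L where "L = (LEAST L. ?P L)"
  have PL': "\<And>j. j \<ge> int L - 2 * int n - 2 \<Longrightarrow> Y u j w = 0" using PL unfolding L_def by blast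
  define f where "f i = sc (of_nat (N choose i)) (Y u (int i - 2 * int n - 2) w)" for i
  have c1: "circ sc Y n u (int N - int n) w = (\<Sum>i<L. f i)"
    unfolding circ_def L_def[symmetric] Let_def f_def
    by (simp add: binomial_gbinomial[symmetric])
  have c2: "(\<Sum>i<L. f i) = (\<Sum>i<L + N + 1. f i)"
    by (rule sum.mono_neutral_left) (auto simp: f_def PL')
  have c3': "Ak sc Y n u N 0 w = (\<Sum>i\<le>N. f i)" by (simp add: Ak_def f_def)
  have c3: "Ak sc Y n u N 0 w = (\<Sum>i<L + N + 1. f i)"
    unfolding c3' f_def
    by (rule sum.mono_neutral_left) (auto simp: binomial_eq_0)
  show ?thesis using c1 c2 c3 by simp
qed

lemma Ak_step:
  assumes voa: "is_voa sc Y vac om c"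
  shows "Ak sc Y n (Lop Y om (-1) u) (Suc N) k w
     = sc (of_nat (2*n+2+k)) (Ak sc Y n u N (Suc k) w)
       + sc (of_nat (2*n+2+k) - 1 - of_nat N) (Ak sc Y n u N k w)"
proof -
  interpret V: vector_space sc by (rule voa_vs[OF voa])
  define T where "T i = Y u (int i - 2 * int n - 3 - int k) w" for i :: nat
  define \<alpha> :: complex where "\<alpha> = of_nat (2*n+2+k)"
  define \<beta> :: complex where "\<beta> = of_nat (2*n+2+k) - 1 - of_nat N"
  define a where "a i = of_nat (Suc N choose i) * (\<alpha> - of_nat i)" for i
  define b :: "nat \<Rightarrow> complex" where "b i = of_nat (N choose i)" for i
  define cc :: "nat \<Rightarrow> complex" where "cc i = (if i = 0 then 0 else of_nat (N choose (i - 1)))" for i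
  have A1: "Ak sc Y n (Lop Y om (-1) u) (Suc N) k w = (\<Sum>i\<le>Suc N. sc (a i) (T i))"
    unfolding Ak_def voa_deriv[OF voa]
    by (rule sum.cong) (simp_all add: a_def T_def \<alpha>_def algebra_simps)
  have A2: "Ak sc Y n u N (Suc k) w = (\<Sum>i\<le>Suc N. sc (b i) (T i))"
    unfolding Ak_def by (simp add: b_def T_def algebra_simps)
  have A3: "Ak sc Y n u N k w = (\<Sum>i\<le>Suc N. sc (cc i) (T i))"
    unfolding Ak_def by (subst sum.atMost_Suc_shift) (simp add: cc_def T_def algebra_simps)
  have pw: "a i = \<alpha> * b i + \<beta> * cc i" for i
  proof (cases i)
    case 0
    then show ?thesis by (simp add: a_def b_def cc_def)
  next
    case (Suc j)
    have e1: "(of_nat (Suc N choose Suc j) :: complex) = of_nat (N choose j) + of_nat (N choose Suc j)"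
      by simp
    have e2: "(of_nat (Suc j) :: complex) * of_nat (Suc N choose Suc j) = of_nat (Suc N) * of_nat (N choose j)"
      using Suc_times_binomial_eq[of N j] by (metis mult.commute of_nat_mult)
    have "a i = of_nat (Suc N choose Suc j) * \<alpha> - of_nat (Suc j) * of_nat (Suc N choose Suc j)"
      by (simp add: a_def Suc algebra_simps)
    also have "\<dots> = (of_nat (N choose j) + of_nat (N choose Suc j)) * \<alpha> - of_nat (Suc N) * of_nat (N choose j)"
      by (subst e2, subst e1, rule refl)
    also have "\<dots> = \<alpha> * b i + \<beta> * cc i"
      by (simp add: b_def cc_def Suc \<beta>_def \<alpha>_def algebra_simps)
    finally show ?thesis .
  qed
  have "(\<Sum>i\<le>Suc N. sc (a i) (T i)) = sc \<alpha> (\<Sum>i\<le>Suc N. sc (b i) (T i)) + sc \<beta> (\<Sum>i\<le>Suc N. sc (cc i) (T i))"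
  proof -
    have "sc \<alpha> (\<Sum>i\<le>Suc N. sc (b i) (T i)) + sc \<beta> (\<Sum>i\<le>Suc N. sc (cc i) (T i))
       = (\<Sum>i\<le>Suc N. sc (\<alpha> * b i) (T i) + sc (\<beta> * cc i) (T i))"
      by (simp only: V.scale_sum_right V.scale_scale sum.distrib)
    also have "\<dots> = (\<Sum>i\<le>Suc N. sc (a i) (T i))"
      by (simp only: pw V.scale_left_distrib)
    finally show ?thesis by simp
  qed
  thus ?thesis using A1 A2 A3 \<alpha>_def \<beta>_def by simp
qed

lemma Ak_in:
  assumes voa: "is_voa sc Y vac om c"
  shows "homog sc Y om u (int N - int n) \<Longrightarrow> Ak sc Y n u N k w \<in> Ocirc sc Y om n"
proof (induction k arbitrary: u N)
  case 0
  interpret V: vector_space sc by (rule voa_vs[OF voa])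
  show ?case unfolding circ_eq[OF voa, symmetric] Ocirc_def
    by (rule V.span_base) (use 0 in blast)
next
  case (Suc k)
  interpret V: vector_space sc by (rule voa_vs[OF voa])
  have h': "homog sc Y om (Lop Y om (-1) u) (int (Suc N) - int n)"
    using homog_Lm1[OF voa Suc.prems] by (simp add: algebra_simps)
  have i1: "Ak sc Y n (Lop Y om (-1) u) (Suc N) k w \<in> Ocirc sc Y om n" by (rule Suc.IH[OF h'])
  have i2: "Ak sc Y n u N k w \<in> Ocirc sc Y om n" by (rule Suc.IH[OF Suc.prems])
  define \<alpha> :: complex where "\<alpha> = of_nat (2*n+2+k)"
  define \<beta> :: complex where "\<beta> = of_nat (2*n+2+k) - 1 - of_nat N"
  have "2*n+2+k \<noteq> 0" by simp
  hence "\<alpha> \<noteq> 0" unfolding \<alpha>_def by (metis of_nat_eq_0_iff)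
  have st: "Ak sc Y n (Lop Y om (-1) u) (Suc N) k w = sc \<alpha> (Ak sc Y n u N (Suc k) w) + sc \<beta> (Ak sc Y n u N k w)"
    unfolding \<alpha>_def \<beta>_def by (rule Ak_step[OF voa])
  have "Ak sc Y n u N (Suc k) w = sc (1 / \<alpha>) (Ak sc Y n (Lop Y om (-1) u) (Suc N) k w - sc \<beta> (Ak sc Y n u N k w))"
    unfolding st using \<open>\<alpha> \<noteq> 0\<close> by (simp add: V.scale_right_distrib)
  thus ?case using i1 i2 unfolding Ocirc_def by (simp add: V.span_scale V.span_diff)
qed



lemma sum_1_N_shift: "(\<Sum>j\<in>{1..N}. f j) = (\<Sum>t<N. f (Suc t))"
  by (induction N) (simp_all add: atLeastAtMostSuc_conv ac_simps)

lemma rhs_eq: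
  fixes sc :: "complex \<Rightarrow> 'v::ab_group_add \<Rightarrow> 'v"
  assumes vs: "vector_space sc" and N: "int N = int n + wt" and p: "m = int p + int n + 1"
  shows "sc ((-1) powi (m + wt))
               (\<Sum>j\<in>{1..nat (int n + wt)}.
                  sc (((of_int (m - int n - 1) :: complex) gchoose (j - 1))
                      * ((of_int (m - int n - int j - 1) :: complex) gchoose (nat (int n + wt) - j)))
                     (Y u (wt - int n - int j - 1) v))
       = (\<Sum>t<N. sc (Gc N p t) (Y u (wt - int n - 2 - int t) v))"
proof -
  interpret V: vector_space sc by (rule vs)
  have nN: "nat (int n + wt) = N" using N by simp
  have s: "(-1) powi (m + wt) = ((-1::complex) ^ (p + N + 1))"
  proof -
    have e: "m + wt = int (p + N + 1)" using N p by simp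
    show ?thesis by (subst e) (rule power_int_of_nat)
  qed
  show ?thesis
    unfolding nN sum_1_N_shift s V.scale_sum_right V.scale_scale
  proof (rule sum.cong[OF refl])
    fix t assume "t \<in> {..<N}"
    have a1: "(of_int (m - int n - 1) :: complex) = of_nat p" using p by simp
    have a2: "(of_int (m - int n - int (Suc t) - 1) :: complex) = of_int (int p - int t - 1)" using p by simp
    have a3: "wt - int n - int (Suc t) - 1 = wt - int n - 2 - int t" by simp
    show "sc ((- 1) ^ (p + N + 1) * ((of_int (m - int n - 1) gchoose (Suc t - 1)) *
               (of_int (m - int n - int (Suc t) - 1) gchoose (N - Suc t))))
             (Y u (wt - int n - int (Suc t) - 1) v) =
          sc (Gc N p t) (Y u (wt - int n - 2 - int t) v)"
      unfolding a1 a2 a3 Gc_def by (simp add: mult.assoc)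
  qed
qed

theorem proposition3p2:
  fixes sc :: "complex \<Rightarrow> 'v::ab_group_add \<Rightarrow> 'v"
    and Y :: "'v \<Rightarrow> int \<Rightarrow> 'v \<Rightarrow> 'v"
    and vac om :: 'v and c :: complex
    and n :: nat and u v :: 'v and wt :: int
  assumes voa: "is_voa sc Y vac om c"
    and hom: "homog sc Y om u wt"
  shows
    "(wt > - int n \<longrightarrow>
       (\<forall>m::int. m \<ge> int n + 1 \<longrightarrow>
          equiv_n sc Y om n (Y u (wt - m - 1) v)
            (sc ((-1) powi (m + wt))
               (\<Sum>j\<in>{1..nat (int n + wt)}.
                  sc (((of_int (m - int n - 1) :: complex) gchoose (j - 1))
                      * ((of_int (m - int n - int j - 1) :: complex) gchoose (nat (int n + wt) - j)))
                     (Y u (wt - int n - int j - 1) v))))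
       \<and> (\<forall>m::int. int n + 1 \<le> m \<and> m \<le> 2 * int n + wt \<longrightarrow>
          sc ((-1) powi (m + wt))
               (\<Sum>j\<in>{1..nat (int n + wt)}.
                  sc (((of_int (m - int n - 1) :: complex) gchoose (j - 1))
                      * ((of_int (m - int n - int j - 1) :: complex) gchoose (nat (int n + wt) - j)))
                     (Y u (wt - int n - int j - 1) v))
          = Y u (wt - m - 1) v))
     \<and> (wt = - int n \<longrightarrow>
       (\<forall>m::int. m \<ge> int n + 1 \<longrightarrow> equiv_n sc Y om n (Y u (wt - m - 1) v) 0))"
proof (intro conjI impI allI)
  interpret V: vector_space sc by (rule voa_vs[OF voa])
  define e where "e t = Y u (wt - int n - 2 - int t) v" for t :: nat
  {
    assume wpos: "wt > - int n"
    define N where "N = nat (int n + wt)"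
    have N: "int N = int n + wt" using wpos N_def by simp
    have hN: "homog sc Y om u (int N - int n)" using hom N by simp
    have rel: "(\<Sum>s\<le>N. sc (of_nat (N choose s)) (e (k+s))) \<in> Ocirc sc Y om n" for k
    proof -
      have "Ak sc Y n u N k v = (\<Sum>s\<le>N. sc (of_nat (N choose s)) (e (k+s)))"
        unfolding Ak_def atMost_atLeast0
        apply (subst sum.atLeastAtMost_rev)
        apply (rule sum.cong[OF refl])
        apply (simp add: e_def binomial_symmetric[symmetric] of_nat_diff N)
        apply (simp add: algebra_simps)
        done
      thus ?thesis using Ak_in[OF voa hN, of k v] by metis
    qed
    have red: "e p - (\<Sum>t<N. sc (Gc N p t) (e t)) \<in> Ocirc sc Y om n" for p
      unfolding Ocirc_def
      by (rule reduce[OF voa_vs[OF voa]]) (use rel Gc_init Gc_rec in \<open>auto simp: Ocirc_def\<close>)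
    {
      fix m :: int assume m: "m \<ge> int n + 1"
      define p where "p = nat (m - int n - 1)"
      have mp: "m = int p + int n + 1" using m p_def by simp
      have ep: "e p = Y u (wt - m - 1) v"
      proof -
        have "wt - m - 1 = wt - int n - 2 - int p" using mp by simp
        thus ?thesis unfolding e_def by (simp only:)
      qed
      show "equiv_n sc Y om n (Y u (wt - m - 1) v)
            (sc ((-1) powi (m + wt))
               (\<Sum>j\<in>{1..nat (int n + wt)}.
                  sc (((of_int (m - int n - 1) :: complex) gchoose (j - 1))
                      * ((of_int (m - int n - int j - 1) :: complex) gchoose (nat (int n + wt) - j)))
                     (Y u (wt - int n - int j - 1) v)))"
        unfolding equiv_n_def rhs_eq[OF voa_vs[OF voa] N mp] ep[symmetric]
        using red[of p] unfolding e_def .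
    }
    {
      fix m :: int assume m: "int n + 1 \<le> m \<and> m \<le> 2 * int n + wt"
      define p where "p = nat (m - int n - 1)"
      have mp: "m = int p + int n + 1" using m p_def by simp
      have pN: "p < N" using m mp N by simp
      have ep: "e p = Y u (wt - m - 1) v"
      proof -
        have "wt - m - 1 = wt - int n - 2 - int p" using mp by simp
        thus ?thesis unfolding e_def by (simp only:)
      qed
      have "(\<Sum>t<N. sc (Gc N p t) (e t)) = (\<Sum>t<N. if t = p then e t else 0)"
        by (rule sum.cong) (auto simp: Gc_init pN)
      also have "\<dots> = e p" using pN by (simp add: sum.delta)
      finally have X: "(\<Sum>t<N. sc (Gc N p t) (e t)) = e p" .
      show "sc ((-1) powi (m + wt))
               (\<Sum>j\<in>{1..nat (int n + wt)}.
                  sc (((of_int (m - int n - 1) :: complex) gchoose (j - 1))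
                      * ((of_int (m - int n - int j - 1) :: complex) gchoose (nat (int n + wt) - j)))
                     (Y u (wt - int n - int j - 1) v))
          = Y u (wt - m - 1) v"
        unfolding rhs_eq[OF voa_vs[OF voa] N mp] ep[symmetric] using X unfolding e_def .
    }
  }
  {
    fix m :: int assume w0: "wt = - int n" and m: "m \<ge> int n + 1"
    have h0: "homog sc Y om u (int 0 - int n)" using hom w0 by simp
    define k where "k = nat (m - int n - 1)"
    have ix: "int 0 - 2 * int n - 2 - int k = wt - m - 1" using w0 m k_def by simp
    have "Ak sc Y n u 0 k v = Y u (int 0 - 2 * int n - 2 - int k) v" unfolding Ak_def by simp
    hence "Ak sc Y n u 0 k v = Y u (wt - m - 1) v" by (simp only: ix)
    thus "equiv_n sc Y om n (Y u (wt - m - 1) v) 0"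
      unfolding equiv_n_def using Ak_in[OF voa h0, of k v] by simp
  }
qed

end
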